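(* Let $0<\mu\le L$, $f\in\mathcal S^2_{\mu,L}(\mathbb R^n)$ with minimizer $x^*$, $\beta\in[0,1]$, $s>0$, and let $X=X(t)$ solve $$\ddot X+2\sqrt\mu\,\dot X+\beta\sqrt s\,\nabla^2 f(X)\dot X+(1+\sqrt{\mu s})\nabla f(X)=0.$$ Define $$\mathcal E_\beta(t)=(1+\sqrt{\mu s})\big(f(X)-f(x^* )\big)+\tfrac14\|\dot X\|^2+\tfrac14\big\|\dot X+2\sqrt\mu(X-x^* )+\beta\sqrt s\,\nabla f(X)\big\|^2.$$ Then $$\frac{d\mathcal E_\beta(t)}{dt}\le-\frac{\sqrt\mu}{4}\mathcal E_\beta(t)-\Delta_\beta,$$ where $$\Delta_\beta=\frac14\left(\frac{8\beta s\sqrt\mu-3s\beta^2\sqrt\mu}{4}\|\nabla f(X)\|^2+2\sqrt\mu\|\dot X\|^2+(\sqrt\mu+\mu\sqrt s)\big(f(X)-f(x^* )\big)\right).$$ In particular, $\frac{d\mathcal E_\beta(t)}{dt}\le-\frac{\sqrt\mu}{4}\mathcal E_\beta(t)$.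
   Context: $\mathcal S^2_{\mu,L}(\mathbb R^n)$ is the class of twice differentiable, $\mu$-strongly convex functions $f:\mathbb R^n\to\mathbb R$ (i.e. $f(y)\ge f(x)+\langle\nabla f(x),y-x\rangle+\frac\mu2\|y-x\|^2$) whose gradient is $L$-Lipschitz and whose Hessian is Lipschitz in Frobenius norm. *)

theory Defs
  imports "HOL-Analysis.Analysis"
begin

definition frob_norm :: "('a::euclidean_space \<Rightarrow> 'a) \<Rightarrow> real" where
  "frob_norm T = sqrt (\<Sum>b\<in>Basis. (norm (T b))\<^sup>2)"

definition S2_class :: "real \<Rightarrow> real \<Rightarrow> ('a::euclidean_space \<Rightarrow> real) \<Rightarrow> ('a \<Rightarrow> 'a)
    \<Rightarrow> ('a \<Rightarrow> 'a \<Rightarrow> 'a) \<Rightarrow> bool" where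
  "S2_class \<mu> L f gradf hessf \<longleftrightarrow>
     (\<forall>x. (f has_derivative (\<lambda>h. gradf x \<bullet> h)) (at x)) \<and>
     (\<forall>x. (gradf has_derivative hessf x) (at x)) \<and>
     (\<forall>x y. f y \<ge> f x + gradf x \<bullet> (y - x) + \<mu> / 2 * (norm (y - x))\<^sup>2) \<and>
     (\<forall>x y. norm (gradf x - gradf y) \<le> L * norm (x - y)) \<and>
     (\<exists>M. \<forall>x y. frob_norm (\<lambda>h. hessf x h - hessf y h) \<le> M * norm (x - y))"

end

theory Submission
  imports Defs
begin

lemma grad_mono:
  assumes "S2_class \<mu> L f gradf hessf" "0 \<le> \<mu>"
  shows "(gradf y - gradf x) \<bullet> (y - x) \<ge> 0"
proof -
  have c: "\<forall>x y. f y \<ge> f x + gradf x \<bullet> (y - x) + \<mu> / 2 * (norm (y - x))\<^sup>2"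
    using assms(1) unfolding S2_class_def by blast
  have 1: "f y \<ge> f x + gradf x \<bullet> (y - x) + \<mu> / 2 * (norm (y - x))\<^sup>2" using c by blast
  have 2: "f x \<ge> f y + gradf y \<bullet> (x - y) + \<mu> / 2 * (norm (x - y))\<^sup>2" using c by blast
  have "0 \<le> \<mu> / 2 * (norm (y - x))\<^sup>2" using assms(2) by simp
  moreover have "gradf y \<bullet> (x - y) = - (gradf y \<bullet> (y - x))"
    by (metis inner_minus_right minus_diff_eq)
  moreover have "norm (x - y) = norm (y - x)" by (simp add: norm_minus_commute)
  ultimately show ?thesis using 1 2 by (simp add: inner_diff_left)
qed

lemma hess_psd:
  fixes f :: "'a::euclidean_space \<Rightarrow> real"
  assumes S: "S2_class \<mu> L f gradf hessf" "0 \<le> \<mu>"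
  shows "hessf x v \<bullet> v \<ge> 0"
proof (rule ccontr)
  assume neg: "\<not> hessf x v \<bullet> v \<ge> 0"
  have dg: "(gradf has_derivative hessf x) (at x)" using S(1) unfolding S2_class_def by blast
  have lin: "linear (hessf x)" using dg has_derivative_linear by blast
  define \<phi> where "\<phi> = (\<lambda>t::real. gradf (x + t *\<^sub>R v) \<bullet> v)"
  have d1: "((\<lambda>t::real. x + t *\<^sub>R v) has_derivative (\<lambda>h. h *\<^sub>R v)) (at 0)"
    by (auto intro!: derivative_eq_intros)
  have dg0: "(gradf has_derivative hessf x) (at ((\<lambda>t::real. x + t *\<^sub>R v) 0))" using dg by simp
  have "((gradf \<circ> (\<lambda>t::real. x + t *\<^sub>R v)) has_derivative (hessf x \<circ> (\<lambda>h. h *\<^sub>R v))) (at 0)"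
    by (rule diff_chain_at[OF d1 dg0])
  note ch = this
  then have "((\<lambda>t. (gradf \<circ> (\<lambda>t::real. x + t *\<^sub>R v)) t \<bullet> v) has_derivative (\<lambda>h. (hessf x \<circ> (\<lambda>h. h *\<^sub>R v)) h \<bullet> v)) (at 0)"
    using has_derivative_inner_left[OF ch[unfolded o_def]] by (simp add: o_def)
  then have "(\<phi> has_derivative (\<lambda>h. h * (hessf x v \<bullet> v))) (at 0)"
    unfolding \<phi>_def using linear_scale[OF lin] by (simp add: o_def)
  then have "DERIV \<phi> 0 :> hessf x v \<bullet> v"
    unfolding has_field_derivative_def
    by (metis (no_types, lifting) mult.commute ext)
  from DERIV_neg_dec_right[OF this] neg obtain d where d: "d > 0" "\<forall>h>0. h < d \<longrightarrow> \<phi> 0 > \<phi> (0 + h)"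
    by force
  have "\<phi> 0 > \<phi> (d/2)" using d by auto
  moreover have "(gradf (x + (d/2) *\<^sub>R v) - gradf x) \<bullet> ((x + (d/2) *\<^sub>R v) - x) \<ge> 0"
    by (rule grad_mono[OF S])
  then have "(d/2) * ((gradf (x + (d/2) *\<^sub>R v) - gradf x) \<bullet> v) \<ge> 0" by simp
  then have "(gradf (x + (d/2) *\<^sub>R v) - gradf x) \<bullet> v \<ge> 0" using d
    by (simp add: zero_le_mult_iff)
  then have "\<phi> (d/2) \<ge> \<phi> 0" unfolding \<phi>_def by (simp add: inner_diff_left)
  ultimately show False by simp
qed

lemma grad_zero_at_min:
  assumes "S2_class \<mu> L f gradf hessf" "\<forall>x. f xstar \<le> f x"
  shows "gradf xstar = 0"
proof -
  have "(f has_derivative (\<lambda>h. gradf xstar \<bullet> h)) (at xstar)" using assms(1) unfolding S2_class_def by blast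
  from differential_zero_maxmin[OF _ open_UNIV this] assms(2)
  have "(\<lambda>h. gradf xstar \<bullet> h) = (\<lambda>v. 0)" by blast
  then have "gradf xstar \<bullet> gradf xstar = 0" by metis
  then show ?thesis by simp
qed

lemma final_ineq:
  fixes F X2 G2 V2 W2 gx qq m r \<beta> :: real
  assumes "gx \<ge> F + m^2/2 * X2" "F \<ge> m^2/2 * X2" "W2 \<le> 3*(V2 + 4*m^2*X2 + \<beta>^2*r^2*G2)"
    "qq \<ge> 0" "F \<ge> 0" "m > 0" "r > 0" "0 \<le> \<beta>" "\<beta> \<le> 1" "G2 \<ge> 0" "V2 \<ge> 0" "X2 \<ge> 0"
  shows "- m*(1+m*r)*gx - \<beta>*r*(1+m*r)/2*G2 - m*V2 - \<beta>*r/2*qq \<le>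
     -(m/4)*((1+m*r)*F + V2/4 + W2/4) - 1/4*((8*\<beta>*r^2*m - 3*r^2*\<beta>^2*m)/4*G2 + 2*m*V2 + (m + m^2*r)*F)"
proof -
  define T1 where "T1 = m*(1+m*r)*(gx - F - m^2/2*X2)"
  define T2 where "T2 = m*(1+m*r)*(F - m^2/2*X2)"
  define T3 where "T3 = m*(3*(V2 + 4*m^2*X2 + \<beta>^2*r^2*G2) - W2)"
  define T4 where "T4 = m^4*r*X2"
  define T5 where "T5 = \<beta>*r*G2"
  define T6 where "T6 = m*V2"
  define T7 where "T7 = \<beta>*r*qq"
  have eq: "(-(m/4)*((1+m*r)*F + V2/4 + W2/4) - 1/4*((8*\<beta>*r^2*m - 3*r^2*\<beta>^2*m)/4*G2 + 2*m*V2 + (m + m^2*r)*F))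
     - (- m*(1+m*r)*gx - \<beta>*r*(1+m*r)/2*G2 - m*V2 - \<beta>*r/2*qq)
     = T1 + T2/2 + T3/16 + 3/4*T4 + T5/2 + T6/4 + T7/2"
    unfolding T1_def T2_def T3_def T4_def T5_def T6_def T7_def
    by (simp add: field_simps power2_eq_square power4_eq_xxxx)
  have "T1 \<ge> 0" unfolding T1_def using assms by (intro mult_nonneg_nonneg) auto
  moreover have "T2 \<ge> 0" unfolding T2_def using assms by (intro mult_nonneg_nonneg) auto
  moreover have "T3 \<ge> 0" unfolding T3_def using assms by (intro mult_nonneg_nonneg) auto
  moreover have "T4 \<ge> 0" "T5 \<ge> 0" "T6 \<ge> 0" "T7 \<ge> 0" unfolding T4_def T5_def T6_def T7_def using assms by auto
  ultimately show ?thesis using eq by linarith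
qed
lemma norm3:
  fixes a b c :: "'a::real_inner"
  shows "(norm (a + b + c))\<^sup>2 \<le> 3 * ((norm a)\<^sup>2 + (norm b)\<^sup>2 + (norm c)\<^sup>2)"
proof -
  have 1: "2 * (a \<bullet> b) \<le> a \<bullet> a + b \<bullet> b" using inner_ge_zero[of "a - b"]
    by (simp add: inner_diff_left inner_diff_right inner_commute)
  have 2: "2 * (a \<bullet> c) \<le> a \<bullet> a + c \<bullet> c" using inner_ge_zero[of "a - c"]
    by (simp add: inner_diff_left inner_diff_right inner_commute)
  have 3: "2 * (b \<bullet> c) \<le> b \<bullet> b + c \<bullet> c" using inner_ge_zero[of "b - c"]
    by (simp add: inner_diff_left inner_diff_right inner_commute)
  show ?thesis using 1 2 3
    by (simp add: power2_norm_eq_inner inner_add_left inner_add_right inner_commute)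
qed

lemma deriv_test:
  fixes f :: "'a::euclidean_space \<Rightarrow> real" and gradf :: "'a \<Rightarrow> 'a" and hessf :: "'a \<Rightarrow> 'a \<Rightarrow> 'a"
    and X V A :: "real \<Rightarrow> 'a" and c m b :: real and xstar :: 'a
  assumes dX: "(X has_vector_derivative V t) (at t)"
    and dV: "(V has_vector_derivative A t) (at t)"
    and fder: "(f has_derivative (\<lambda>h. gradf (X t) \<bullet> h)) (at (X t))"
    and gder: "(gradf has_derivative hessf (X t)) (at (X t))"
  defines "W \<equiv> \<lambda>t. V t + (2 * m) *\<^sub>R (X t - xstar) + b *\<^sub>R gradf (X t)"
  shows "((\<lambda>t. c * (f (X t) - f xstar) + 1/4 * (V t \<bullet> V t) + 1/4 * (W t \<bullet> W t)) has_derivative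
     (\<lambda>h. h * (c * (gradf (X t) \<bullet> V t) + 1/2 * (V t \<bullet> A t)
        + 1/2 * (W t \<bullet> (A t + (2*m) *\<^sub>R V t + b *\<^sub>R hessf (X t) (V t)))))) (at t)"
proof -
  have dX': "(X has_derivative (\<lambda>h. h *\<^sub>R V t)) (at t)" using dX by (simp add: has_vector_derivative_def)
  have dV': "(V has_derivative (\<lambda>h. h *\<^sub>R A t)) (at t)" using dV by (simp add: has_vector_derivative_def)
  have lin: "linear (hessf (X t))" using gder has_derivative_linear by blast
  have df: "((\<lambda>t. f (X t)) has_derivative (\<lambda>h. h * (gradf (X t) \<bullet> V t))) (at t)"
    using diff_chain_at[OF dX' fder] by (simp add: o_def)
  have dg: "((\<lambda>t. gradf (X t)) has_derivative (\<lambda>h. h *\<^sub>R hessf (X t) (V t))) (at t)"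
    using diff_chain_at[OF dX' gder] linear_scale[OF lin] by (simp add: o_def)
  have dW: "(W has_derivative (\<lambda>h. h *\<^sub>R (A t + (2*m) *\<^sub>R V t + b *\<^sub>R hessf (X t) (V t)))) (at t)"
    unfolding W_def
    by (rule derivative_eq_intros dV' dX' dg refl | simp add: algebra_simps)+
  show ?thesis
    by (rule derivative_eq_intros df dV' dW refl | simp add: algebra_simps inner_commute)+
qed
theorem lemma4p2:
  fixes f :: "'a::euclidean_space \<Rightarrow> real" and gradf :: "'a \<Rightarrow> 'a" and hessf :: "'a \<Rightarrow> 'a \<Rightarrow> 'a"
    and X V A :: "real \<Rightarrow> 'a" and T :: "real set"
    and \<mu> L \<beta> s :: real and xstar :: 'a
  assumes "0 < \<mu>" and "\<mu> \<le> L"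
    and "S2_class \<mu> L f gradf hessf"
    and "\<forall>x. f xstar \<le> f x"
    and "0 \<le> \<beta>" and "\<beta> \<le> 1" and "0 < s"
    and "open T"
    and "\<forall>t\<in>T. (X has_vector_derivative V t) (at t)"
    and "\<forall>t\<in>T. (V has_vector_derivative A t) (at t)"
    and "\<forall>t\<in>T. A t + (2 * sqrt \<mu>) *\<^sub>R V t + (\<beta> * sqrt s) *\<^sub>R hessf (X t) (V t)
                 + (1 + sqrt (\<mu> * s)) *\<^sub>R gradf (X t) = 0"
  defines "E \<equiv> \<lambda>t. (1 + sqrt (\<mu> * s)) * (f (X t) - f xstar) + 1/4 * (norm (V t))\<^sup>2
       + 1/4 * (norm (V t + (2 * sqrt \<mu>) *\<^sub>R (X t - xstar) + (\<beta> * sqrt s) *\<^sub>R gradf (X t)))\<^sup>2"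
    and "\<Delta> \<equiv> \<lambda>t. 1/4 * ((8 * \<beta> * s * sqrt \<mu> - 3 * s * \<beta>\<^sup>2 * sqrt \<mu>) / 4 * (norm (gradf (X t)))\<^sup>2
       + 2 * sqrt \<mu> * (norm (V t))\<^sup>2 + (sqrt \<mu> + \<mu> * sqrt s) * (f (X t) - f xstar))"
  shows "\<forall>t\<in>T. \<exists>D. (E has_real_derivative D) (at t) \<and>
           D \<le> - (sqrt \<mu> / 4) * E t - \<Delta> t \<and> D \<le> - (sqrt \<mu> / 4) * E t"
proof
  fix t assume t: "t \<in> T"
  have S: "S2_class \<mu> L f gradf hessf" by fact
  define m where "m = sqrt \<mu>"
  define r where "r = sqrt s"
  define c where "c = 1 + m * r"
  have m0: "m > 0" unfolding m_def using assms(1) by simp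
  have r0: "r > 0" unfolding r_def using assms(7) by simp
  have mu: "\<mu> = m^2" unfolding m_def using assms(1) by simp
  have ss: "s = r^2" unfolding r_def using assms(7) by simp
  have cc: "1 + sqrt (\<mu> * s) = c" unfolding c_def m_def r_def by (simp add: real_sqrt_mult)
  define v where "v = V t"
  define a where "a = A t"
  define g where "g = gradf (X t)"
  define hv where "hv = hessf (X t) (V t)"
  define x where "x = X t - xstar"
  define w where "w = v + (2 * m) *\<^sub>R x + (\<beta> * r) *\<^sub>R g"
  define F where "F = f (X t) - f xstar"
  have fder: "(f has_derivative (\<lambda>h. gradf (X t) \<bullet> h)) (at (X t))"
    using S unfolding S2_class_def by blast
  have gder: "(gradf has_derivative hessf (X t)) (at (X t))"
    using S unfolding S2_class_def by blast
  have dXt: "(X has_vector_derivative V t) (at t)" using assms(9) t by blast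
  have dVt: "(V has_vector_derivative A t) (at t)" using assms(10) t by blast
  have Eeq: "E = (\<lambda>t. c * (f (X t) - f xstar) + 1/4 * (V t \<bullet> V t)
      + 1/4 * ((V t + (2 * m) *\<^sub>R (X t - xstar) + (\<beta> * r) *\<^sub>R gradf (X t)) \<bullet>
               (V t + (2 * m) *\<^sub>R (X t - xstar) + (\<beta> * r) *\<^sub>R gradf (X t))))"
    unfolding E_def cc m_def r_def by (simp add: power2_norm_eq_inner)
  define D0 where "D0 = c * (g \<bullet> v) + 1/2 * (v \<bullet> a) + 1/2 * (w \<bullet> (a + (2*m) *\<^sub>R v + (\<beta> * r) *\<^sub>R hv))"
  have dE0: "(E has_derivative (\<lambda>h. h * D0)) (at t)"
    unfolding Eeq D0_def v_def a_def g_def hv_def w_def x_def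
    by (rule deriv_test[where X=X and V=V and A=A and t=t and f=f and gradf=gradf and hessf=hessf, OF dXt dVt fder gder])
  have dE: "(E has_real_derivative D0) (at t)"
    using dE0 unfolding has_field_derivative_def by (metis (no_types, lifting) mult.commute ext)
  have ode: "a + (2 * m) *\<^sub>R v + (\<beta> * r) *\<^sub>R hv + c *\<^sub>R g = 0"
    using assms(11) t unfolding a_def v_def hv_def g_def m_def r_def cc[symmetric] by blast
  then have a_eq: "a = - ((2 * m) *\<^sub>R v + (\<beta> * r) *\<^sub>R hv + c *\<^sub>R g)"
    by (simp add: algebra_simps eq_neg_iff_add_eq_0)
  have D0_eq: "D0 = - m * c * (g \<bullet> x) - \<beta> * r * c / 2 * (g \<bullet> g) - m * (v \<bullet> v) - \<beta> * r / 2 * (v \<bullet> hv)"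
    unfolding D0_def a_eq w_def
    by (simp add: inner_add_left inner_add_right inner_commute algebra_simps)
  have conv: "\<forall>x y. f y \<ge> f x + gradf x \<bullet> (y - x) + \<mu> / 2 * (norm (y - x))\<^sup>2"
    using S unfolding S2_class_def by blast
  have g0: "gradf xstar = 0" by (rule grad_zero_at_min[OF S assms(4)])
  have nx: "(norm (xstar - X t))\<^sup>2 = x \<bullet> x"
    unfolding x_def by (metis norm_minus_commute power2_norm_eq_inner)
  have P1: "g \<bullet> x \<ge> F + m^2/2 * (x \<bullet> x)"
  proof -
    have "f xstar \<ge> f (X t) + gradf (X t) \<bullet> (xstar - X t) + \<mu> / 2 * (norm (xstar - X t))\<^sup>2"
      using conv by blast
    moreover have "gradf (X t) \<bullet> (xstar - X t) = - (g \<bullet> x)"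
      unfolding g_def x_def by (simp add: inner_diff_right)
    ultimately show ?thesis unfolding F_def nx mu by simp
  qed
  have P2: "F \<ge> m^2/2 * (x \<bullet> x)"
  proof -
    have "f (X t) \<ge> f xstar + gradf xstar \<bullet> (X t - xstar) + \<mu> / 2 * (norm (X t - xstar))\<^sup>2"
      using conv by blast
    then show ?thesis unfolding F_def g0 mu x_def by (simp add: power2_norm_eq_inner)
  qed
  have P3: "w \<bullet> w \<le> 3*(v \<bullet> v + 4*m^2*(x \<bullet> x) + \<beta>^2*r^2*(g \<bullet> g))"
  proof -
    have "(norm w)\<^sup>2 \<le> 3 * ((norm v)\<^sup>2 + (norm ((2 * m) *\<^sub>R x))\<^sup>2 + (norm ((\<beta> * r) *\<^sub>R g))\<^sup>2)"
      unfolding w_def by (rule norm3)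
    then show ?thesis by (simp add: power2_norm_eq_inner power_mult_distrib)
  qed
  have P4: "v \<bullet> hv \<ge> 0"
    using hess_psd[OF S] assms(1) unfolding v_def hv_def by (simp add: inner_commute)
  have F0: "F \<ge> 0" unfolding F_def using assms(4) by simp
  have main: "D0 \<le> -(m/4)*((1+m*r)*F + (v \<bullet> v)/4 + (w \<bullet> w)/4)
      - 1/4*((8*\<beta>*r^2*m - 3*r^2*\<beta>^2*m)/4*(g \<bullet> g) + 2*m*(v \<bullet> v) + (m + m^2*r)*F)"
    unfolding D0_eq c_def
    by (rule final_ineq[OF P1 P2 P3 P4 F0 m0 r0 assms(5,6) inner_ge_zero inner_ge_zero inner_ge_zero])
  have Et: "E t = (1+m*r)*F + (v \<bullet> v)/4 + (w \<bullet> w)/4"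
    unfolding Eeq c_def F_def v_def w_def x_def g_def by simp
  have Dt: "\<Delta> t = 1/4*((8*\<beta>*r^2*m - 3*r^2*\<beta>^2*m)/4*(g \<bullet> g) + 2*m*(v \<bullet> v) + (m + m^2*r)*F)"
    unfolding \<Delta>_def g_def v_def F_def
    by (simp add: power2_norm_eq_inner m_def[symmetric] r_def[symmetric] mu ss algebra_simps abs_of_pos[OF m0] abs_of_pos[OF r0])
  have Dpos: "\<Delta> t \<ge> 0"
  proof -
    have "8*\<beta>*r^2*m - 3*r^2*\<beta>^2*m = \<beta>*(8 - 3*\<beta>)*(r^2*m)" by (simp add: algebra_simps power2_eq_square)
    also have "\<dots> \<ge> 0" using assms(5,6) m0 by simp
    finally have "8*\<beta>*r^2*m - 3*r^2*\<beta>^2*m \<ge> 0" .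
    then show ?thesis unfolding Dt using m0 r0 F0 by (simp add: add_nonneg_nonneg)
  qed
  have "D0 \<le> - (sqrt \<mu> / 4) * E t - \<Delta> t" using main unfolding Et Dt m_def[symmetric] by simp
  then show "\<exists>D. (E has_real_derivative D) (at t) \<and>
           D \<le> - (sqrt \<mu> / 4) * E t - \<Delta> t \<and> D \<le> - (sqrt \<mu> / 4) * E t"
    using dE Dpos by auto
qed

end
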